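(* Let $B$ be a Banach space, $C\subset B$ a convex set, $f:B\to\mathbb{R}\cup\{+\infty\}$ a function, and $k$ a symmetric bilinear map, with pairing written $\langle\pi,k(\gamma)\rangle$, which is negative (not necessarily definite) on $\Delta C=\mathrm{Span}\{\pi-\gamma:\pi,\gamma\in C\}$, i.e. $\langle z,k(z)\rangle\leq0$ for all $z\in\Delta C$. Define $\mathcal{L}:C\to\mathbb{R}\cup\{+\infty\}$ by $\mathcal{L}(\pi)=\frac12\langle\pi,k(\pi)\rangle+2f(\pi)$ and $\mathcal{F}(\pi,\gamma)=\frac12\langle\pi,k(\gamma)\rangle+f(\pi)+f(\gamma)$ for $\pi,\gamma\in C$. Assume there exists $\pi_0\in C$ with $\mathcal{L}(\pi_0)<+\infty$. Then for every $(\pi_*,\gamma_* )\in\arg\min_{C\times C}\mathcal{F}$, one has $\mathcal{F}(\pi_*,\pi_* )=\mathcal{F}(\gamma_*,\gamma_* )=\mathcal{F}(\pi_*,\gamma_* )$. Moreover, if either $k$ is definite on $\Delta C$ (i.e. $\langle z,k(z)\rangle=0$, $z\in\Delta C$ implies $z=0$) or $f$ is strictly convex, then $\pi_*=\gamma_*$. *)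

theory Defs
  imports "HOL-Analysis.Analysis"
begin

definition diff_span :: "'b::real_vector set \<Rightarrow> 'b set" where
  "diff_span C = span {p - g | p g. p \<in> C \<and> g \<in> C}"

definition strictly_convex_on_ereal :: "'b::real_vector set \<Rightarrow> ('b \<Rightarrow> ereal) \<Rightarrow> bool" where
  "strictly_convex_on_ereal C f \<longleftrightarrow>
     (\<forall>x\<in>C. \<forall>y\<in>C. x \<noteq> y \<longrightarrow> f x < \<infinity> \<longrightarrow> f y < \<infinity> \<longrightarrow>
        (\<forall>t::real. 0 < t \<and> t < 1 \<longrightarrow>
           f ((1 - t) *\<^sub>R x + t *\<^sub>R y) < ereal (1 - t) * f x + ereal t * f y))"

definition LL :: "('b \<Rightarrow> 'b \<Rightarrow> real) \<Rightarrow> ('b \<Rightarrow> ereal) \<Rightarrow> 'b \<Rightarrow> ereal" where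
  "LL k f p = ereal (k p p / 2) + 2 * f p"

definition FF :: "('b \<Rightarrow> 'b \<Rightarrow> real) \<Rightarrow> ('b \<Rightarrow> ereal) \<Rightarrow> 'b \<Rightarrow> 'b \<Rightarrow> ereal" where
  "FF k f p g = ereal (k p g / 2) + f p + f g"

end

theory Submission
  imports Defs
begin

theorem theorem3:
  fixes C :: "'b::banach set"
    and f :: "'b \<Rightarrow> ereal"
    and k :: "'b \<Rightarrow> 'b \<Rightarrow> real"
    and p0 ps gs :: 'b
  assumes convC: "convex C"
    and f_notminf: "\<And>x. f x \<noteq> -\<infinity>"
    and bil: "bilinear k"
    and symm: "\<And>x y. k x y = k y x"
    and neg: "\<And>z. z \<in> diff_span C \<Longrightarrow> k z z \<le> 0"
    and p0: "p0 \<in> C" "LL k f p0 < \<infinity>"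
    and ps: "ps \<in> C" and gs: "gs \<in> C"
    and argmin: "\<And>p g. p \<in> C \<Longrightarrow> g \<in> C \<Longrightarrow> FF k f ps gs \<le> FF k f p g"
  shows "FF k f ps ps = FF k f gs gs \<and> FF k f gs gs = FF k f ps gs
    \<and> (((\<forall>z\<in>diff_span C. k z z = 0 \<longrightarrow> z = 0) \<or> strictly_convex_on_ereal C f) \<longrightarrow> ps = gs)"
proof -
  have "f p0 \<noteq> \<infinity>"
  proof
    assume "f p0 = \<infinity>"
    then have "LL k f p0 = \<infinity>" by (simp add: LL_def)
    with p0(2) show False by simp
  qed
  with f_notminf obtain c0 where c0: "f p0 = ereal c0" by (cases "f p0") auto
  have F00: "FF k f p0 p0 = ereal (k p0 p0 / 2 + c0 + c0)" using c0 by (simp add: FF_def)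
  have fin: "FF k f ps gs < \<infinity>"
    using argmin[OF p0(1) p0(1)] unfolding F00 using order_le_less_trans by fastforce
  have "f ps \<noteq> \<infinity>"
  proof
    assume "f ps = \<infinity>" then have "FF k f ps gs = \<infinity>" using f_notminf[of gs] by (simp add: FF_def)
    with fin show False by simp
  qed
  with f_notminf obtain a where a: "f ps = ereal a" by (cases "f ps") auto
  have "f gs \<noteq> \<infinity>"
  proof
    assume "f gs = \<infinity>" then have "FF k f ps gs = \<infinity>" using a by (simp add: FF_def)
    with fin show False by simp
  qed
  with f_notminf obtain b where b: "f gs = ereal b" by (cases "f gs") auto
  have Fab: "FF k f ps gs = ereal (k ps gs / 2 + a + b)" using a b by (simp add: FF_def)
  have Faa: "FF k f ps ps = ereal (k ps ps / 2 + a + a)" using a by (simp add: FF_def)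
  have Fbb: "FF k f gs gs = ereal (k gs gs / 2 + b + b)" using b by (simp add: FF_def)
  have i1: "k ps gs / 2 + a + b \<le> k ps ps / 2 + a + a" using argmin[OF ps ps] Fab Faa by simp
  have i2: "k ps gs / 2 + a + b \<le> k gs gs / 2 + b + b" using argmin[OF gs gs] Fab Fbb by simp
  have dC: "ps - gs \<in> diff_span C" unfolding diff_span_def
    by (rule span_base) (use ps gs in blast)
  have kexp: "k (ps - gs) (ps - gs) = k ps ps - 2 * k ps gs + k gs gs"
    using symm[of gs ps] by (simp add: bilinear_lsub[OF bil] bilinear_rsub[OF bil])
  have kz: "k (ps - gs) (ps - gs) = 0" using neg[OF dC] i1 i2 kexp by linarith
  have e1: "k ps gs / 2 + a + b = k ps ps / 2 + a + a" using i1 i2 kexp kz by linarith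
  have e2: "k ps gs / 2 + a + b = k gs gs / 2 + b + b" using i1 i2 kexp kz by linarith
  have part3: "ps = gs" if h: "(\<forall>z\<in>diff_span C. k z z = 0 \<longrightarrow> z = 0) \<or> strictly_convex_on_ereal C f"
  proof (rule ccontr)
    assume ne: "ps \<noteq> gs"
    from h show False
    proof
      assume "\<forall>z\<in>diff_span C. k z z = 0 \<longrightarrow> z = 0"
      with dC kz ne show False by auto
    next
      assume sc: "strictly_convex_on_ereal C f"
      define m where "m = (1 - 1/2) *\<^sub>R ps + (1/2::real) *\<^sub>R gs"
      have mC: "m \<in> C" unfolding m_def using convC ps gs by (simp add: convex_def)
      have lt: "f m < ereal (1 - 1/2) * f ps + ereal (1/2) * f gs"
      proof -
        have "\<forall>t::real. 0 < t \<and> t < 1 \<longrightarrow> f ((1 - t) *\<^sub>R ps + t *\<^sub>R gs) < ereal (1 - t) * f ps + ereal t * f gs"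
        proof -
          have h1: "f ps < \<infinity>" "f gs < \<infinity>" using a b by simp_all
          show ?thesis using sc ps gs ne h1 unfolding strictly_convex_on_ereal_def by blast
        qed
        then show ?thesis unfolding m_def by (metis field_sum_of_halves half_gt_zero less_add_same_cancel1 zero_less_one)
      qed
      then have "f m < ereal ((a + b)/2)" using a b by (simp add: field_simps)
      with f_notminf[of m] obtain c where c: "f m = ereal c" "c < (a+b)/2" by (cases "f m") auto
      have m2: "m = (1/2::real) *\<^sub>R ps + (1/2::real) *\<^sub>R gs" unfolding m_def by simp
      have k1: "k ps m = k ps ps / 2 + k ps gs / 2" unfolding m2
        by (simp add: bilinear_radd[OF bil] bilinear_rmul[OF bil])
      have k2: "k gs m = k ps gs / 2 + k gs gs / 2" unfolding m2 using symm[of gs ps]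
        by (simp add: bilinear_radd[OF bil] bilinear_rmul[OF bil])
      have k3: "k m m = k ps m / 2 + k gs m / 2"
        by (subst (1) m2) (simp add: bilinear_ladd[OF bil] bilinear_lmul[OF bil])
      have km: "k m m = (k ps ps + 2 * k ps gs + k gs gs) / 4"
        unfolding k3 k1 k2 by (simp add: field_simps)
      have "FF k f ps gs \<le> FF k f m m" by (rule argmin[OF mC mC])
      then have "k ps gs / 2 + a + b \<le> k m m / 2 + c + c" using Fab c by (simp add: FF_def)
      then have "k ps gs / 2 + a + b \<le> (k ps ps + 2 * k ps gs + k gs gs) / 8 + c + c" using km by simp
      moreover have "k ps ps + k gs gs = 2 * k ps gs" using kexp kz by linarith
      ultimately show False using c(2) by (simp add: field_simps)
    qed
  qed
  show ?thesis using Faa Fbb Fab e1 e2 part3 by simp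
qed

end
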